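(* Let $n\ge3$ and let $\sigma$ be an asymptotically flat Riemannian metric on the complement of a ball in $\mathbb{R}^n$. For any $h>0$ and any $r_1>0$ there exist $r_0\ge r_1$, depending only on $\sigma$, and a rotationally symmetric function $b\colon\mathbb{R}^n\setminus B_{r_0}(0)\to\mathbb{R}$ such that (i) $b>0$; (ii) $b(x)\to0$ as $|x|\to\infty$; (iii) $b(x)\ge h$ for $|x|=r_0$; (iv) $g^{ij}(\sigma,\nabla b)\,{}^\sigma\nabla^2_{ij}b\le0$, i.e. $b$ is a static supersolution.
   Context: Asymptotic flatness: $|\sigma_{ij}-\delta_{ij}|\lesssim\omega(r)$ and $|\partial\sigma_{ij}|\lesssim\omega(r)/r$ for large $r=|x|$, where $\omega$ is bounded with $\omega(r)\to0$ as $r\to\infty$. For $|\nabla w|_\sigma<1$, $g^{ij}(\sigma,\nabla w)=\sigma^{ij}+\frac{\sigma^{ik}\sigma^{jl}w_kw_l}{1-\sigma^{kl}w_kw_l}$, and ${}^\sigma\nabla^2_{ij}w=w_{ij}-\Gamma^k_{ij}w_k$ is the Hessian with respect to $\sigma$. *)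

theory Defs
  imports "HOL-Analysis.Analysis"
begin

text \<open>A metric sigma on the exterior region {x. norm x > R} of R^n, given as a
  matrix-valued function; dsig x i j k is the partial derivative d_k sigma_ij at x.\<close>

definition riemannian_metric_outside ::
  "real \<Rightarrow> (real^'n \<Rightarrow> real^'n^'n) \<Rightarrow> (real^'n \<Rightarrow> 'n \<Rightarrow> 'n \<Rightarrow> 'n \<Rightarrow> real) \<Rightarrow> bool" where
  "riemannian_metric_outside R sig dsig \<longleftrightarrow>
     (\<forall>x. norm x > R \<longrightarrow>
        transpose (sig x) = sig x \<and>
        (\<forall>v. v \<noteq> 0 \<longrightarrow> v \<bullet> (sig x *v v) > 0) \<and>
        (\<forall>i j. ((\<lambda>y. sig y $ i $ j) has_derivative
                 (\<lambda>v. \<Sum>k\<in>UNIV. dsig x i j k * v $ k)) (at x))) \<and>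
     (\<forall>i j k. continuous_on {x. norm x > R} (\<lambda>x. dsig x i j k))"

definition asymptotically_flat ::
  "(real^'n \<Rightarrow> real^'n^'n) \<Rightarrow> (real^'n \<Rightarrow> 'n \<Rightarrow> 'n \<Rightarrow> 'n \<Rightarrow> real) \<Rightarrow> bool" where
  "asymptotically_flat sig dsig \<longleftrightarrow>
     (\<exists>(\<omega>::real \<Rightarrow> real) C R1. bounded (range \<omega>) \<and> (\<omega> \<longlongrightarrow> 0) at_top \<and>
        (\<forall>x. norm x \<ge> R1 \<longrightarrow>
           (\<forall>i j. \<bar>sig x $ i $ j - (if i = j then 1 else 0)\<bar> \<le> C * \<omega> (norm x)) \<and>
           (\<forall>i j k. \<bar>dsig x i j k\<bar> \<le> C * \<omega> (norm x) / norm x)))"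

definition sinv :: "(real^'n \<Rightarrow> real^'n^'n) \<Rightarrow> real^'n \<Rightarrow> 'n \<Rightarrow> 'n \<Rightarrow> real" where
  "sinv sig x i j = matrix_inv (sig x) $ i $ j"

definition sq_norm_sig :: "(real^'n \<Rightarrow> real^'n^'n) \<Rightarrow> real^'n \<Rightarrow> real^'n \<Rightarrow> real" where
  "sq_norm_sig sig x p = (\<Sum>k\<in>UNIV. \<Sum>l\<in>UNIV. sinv sig x k l * p $ k * p $ l)"

definition g_inv :: "(real^'n \<Rightarrow> real^'n^'n) \<Rightarrow> real^'n \<Rightarrow> real^'n \<Rightarrow> 'n \<Rightarrow> 'n \<Rightarrow> real" where
  "g_inv sig x p i j = sinv sig x i j +
     (\<Sum>k\<in>UNIV. \<Sum>l\<in>UNIV. sinv sig x i k * sinv sig x j l * p $ k * p $ l)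
       / (1 - sq_norm_sig sig x p)"

definition christoffel ::
  "(real^'n \<Rightarrow> real^'n^'n) \<Rightarrow> (real^'n \<Rightarrow> 'n \<Rightarrow> 'n \<Rightarrow> 'n \<Rightarrow> real) \<Rightarrow> real^'n \<Rightarrow> 'n \<Rightarrow> 'n \<Rightarrow> 'n \<Rightarrow> real" where
  "christoffel sig dsig x k i j =
     (1/2) * (\<Sum>l\<in>UNIV. sinv sig x k l * (dsig x j l i + dsig x i l j - dsig x i j l))"

text \<open>sigma-Hessian: w_ij - Gamma^k_ij w_k, given gradient p and coordinate Hessian H.\<close>
definition sig_hessian ::
  "(real^'n \<Rightarrow> real^'n^'n) \<Rightarrow> (real^'n \<Rightarrow> 'n \<Rightarrow> 'n \<Rightarrow> 'n \<Rightarrow> real) \<Rightarrow> real^'n \<Rightarrow> real^'n \<Rightarrow> real^'n^'n \<Rightarrow> 'n \<Rightarrow> 'n \<Rightarrow> real" where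
  "sig_hessian sig dsig x p H i j = H $ i $ j - (\<Sum>k\<in>UNIV. christoffel sig dsig x k i j * p $ k)"

definition static_operator ::
  "(real^'n \<Rightarrow> real^'n^'n) \<Rightarrow> (real^'n \<Rightarrow> 'n \<Rightarrow> 'n \<Rightarrow> 'n \<Rightarrow> real) \<Rightarrow> real^'n \<Rightarrow> real^'n \<Rightarrow> real^'n^'n \<Rightarrow> real" where
  "static_operator sig dsig x p H =
     (\<Sum>i\<in>UNIV. \<Sum>j\<in>UNIV. g_inv sig x p i j * sig_hessian sig dsig x p H i j)"

end

theory Submission
  imports Defs
begin

lemma sum_bound1:
  fixes F :: "'n::finite \<Rightarrow> real"
  assumes "\<And>i. \<bar>F i\<bar> \<le> B"
  shows "\<bar>\<Sum>i\<in>UNIV. F i\<bar> \<le> real CARD('n) * B"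
proof -
  have "\<bar>\<Sum>i\<in>UNIV. F i\<bar> \<le> (\<Sum>i\<in>UNIV. \<bar>F i\<bar>)" by (rule sum_abs)
  also have "\<dots> \<le> (\<Sum>i\<in>(UNIV::'n set). B)" by (rule sum_mono) (use assms in auto)
  finally show ?thesis by simp
qed

lemma sum_bound2:
  fixes F :: "'n::finite \<Rightarrow> 'n \<Rightarrow> real"
  assumes "\<And>i j. \<bar>F i j\<bar> \<le> B"
  shows "\<bar>\<Sum>i\<in>UNIV. \<Sum>j\<in>UNIV. F i j\<bar> \<le> real CARD('n) * (real CARD('n) * B)"
  by (rule sum_bound1, rule sum_bound1, rule assms)

lemma sum_delta2:
  fixes F :: "'n::finite \<Rightarrow> 'n \<Rightarrow> real"
  shows "(\<Sum>i\<in>UNIV. \<Sum>j\<in>UNIV. (if i = j then 1 else 0) * F i j) = (\<Sum>i\<in>UNIV. F i i)"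
proof -
  have "\<And>i. (\<Sum>j\<in>UNIV. (if i = j then 1 else 0) * F i j) = F i i"
  proof -
    fix i
    have "(\<Sum>j\<in>UNIV. (if i = j then 1 else 0) * F i j) = (\<Sum>j\<in>UNIV. if i = j then F i j else 0)"
      by (rule sum.cong) auto
    also have "\<dots> = F i i" by (simp add: sum.delta)
    finally show "(\<Sum>j\<in>UNIV. (if i = j then 1 else 0) * F i j) = F i i" .
  qed
  then show ?thesis by simp
qed

lemma sq_sum_norm:
  fixes x :: "real^'n"
  shows "(\<Sum>i\<in>UNIV. x$i * x$i) = (norm x)^2"
  by (metis dot_square_norm inner_vec_def inner_real_def)

lemma quot_diff:
  fixes X Y D E e1 e2 :: real
  assumes "\<bar>X - Y\<bar> \<le> e1" "\<bar>D - E\<bar> \<le> e2" "D \<ge> 74/100" "E \<ge> 3/4" "\<bar>Y\<bar> \<le> 1/4"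
  shows "\<bar>X / D - Y / E\<bar> \<le> 2 * e1 + e2 / 2"
proof -
  have e: "X / D - Y / E = (X - Y) / D + Y * (E - D) / (D * E)"
    using assms by (simp add: field_simps)
  have 1: "\<bar>(X - Y) / D\<bar> \<le> 2 * e1"
  proof -
    have "\<bar>(X - Y) / D\<bar> = \<bar>X - Y\<bar> / D" using assms by simp
    also have "\<dots> \<le> e1 / D" using assms by (simp add: divide_right_mono)
    also have "\<dots> \<le> e1 / (74/100)" using assms
      by (intro divide_left_mono) (auto intro: order_trans[OF abs_ge_zero])
    also have "\<dots> \<le> 2 * e1" proof -
      have "e1 \<ge> 0" using assms(1) abs_ge_zero order_trans by blast
      then show ?thesis by simp
    qed
    finally show ?thesis .
  qed
  have 2: "\<bar>Y * (E - D) / (D * E)\<bar> \<le> e2 / 2"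
  proof -
    have "(74/100) * (3/4) \<le> D * E" using assms
      by (intro mult_mono) auto
    then have DE: "D * E \<ge> 1/2" by simp
    have "\<bar>Y * (E - D) / (D * E)\<bar> = \<bar>Y\<bar> * \<bar>E - D\<bar> / (D * E)" using DE assms by (simp add: abs_mult)
    also have "\<dots> \<le> (1/4) * e2 / (D * E)"
      using assms DE by (intro divide_right_mono mult_mono) auto
    also have "\<dots> \<le> (1/4) * e2 / (1/2)"
      using assms DE by (intro divide_left_mono) auto
    finally show ?thesis by simp
  qed
  have "\<bar>X / D - Y / E\<bar> \<le> \<bar>(X - Y) / D\<bar> + \<bar>Y * (E - D) / (D * E)\<bar>"
    unfolding e by (rule abs_triangle_ineq)
  then show ?thesis using 1 2 by linarith
qed

lemma key:
  fixes S :: "'n::finite \<Rightarrow> 'n \<Rightarrow> real" and G :: "'n \<Rightarrow> 'n \<Rightarrow> 'n \<Rightarrow> real"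
    and x :: "real^'n" and p :: "'n \<Rightarrow> real" and Hf :: "'n \<Rightarrow> 'n \<Rightarrow> real"
  assumes N3: "real CARD('n) \<ge> 3"
    and Sb: "\<And>i j. \<bar>S i j - (if i = j then 1 else 0)\<bar> \<le> \<eta>"
    and eta: "0 \<le> \<eta>" "real CARD('n) ^ 3 * \<eta> \<le> 1/100"
    and Gb: "\<And>k i j. \<bar>G k i j\<bar> \<le> \<gamma>"
    and r: "norm x = r" "r > 0"
    and Q: "Q > 0" "Q * r \<le> 1/2"
    and al: "0 \<le> \<alpha>" "\<alpha> \<le> 1/4"
    and small: "8 * real CARD('n) ^ 4 * \<eta> * Q + 4 * real CARD('n) ^ 3 * \<gamma> * Q * r \<le> Q / 4"
    and px: "\<And>k. p k = - Q * x$k"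
    and Hx: "\<And>i j. Hf i j = (\<alpha> + 2) * Q / r^2 * x$i * x$j - (if i = j then Q else 0)"
  shows "(\<Sum>k\<in>UNIV. \<Sum>l\<in>UNIV. S k l * p k * p l) < 1 \<and>
    (\<Sum>i\<in>UNIV. \<Sum>j\<in>UNIV. (S i j + (\<Sum>k\<in>UNIV. \<Sum>l\<in>UNIV. S i k * S j l * p k * p l)
        / (1 - (\<Sum>k\<in>UNIV. \<Sum>l\<in>UNIV. S k l * p k * p l))) * (Hf i j - (\<Sum>k\<in>UNIV. G k i j * p k))) \<le> 0"
proof -
  define N where "N = real CARD('n)"
  define q where "q = Q * r"
  define a where "a i j = S i j - (if i = j then 1 else 0)" for i j
  have ab: "\<bar>a i j\<bar> \<le> \<eta>" for i j using Sb a_def by auto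
  have Sa: "S i j = (if i = j then 1 else 0) + a i j" for i j using a_def by simp
  have N3': "N \<ge> 3" using N3 N_def by simp
  have N3e: "N^3 * \<eta> \<le> 1/100" using eta N_def by simp
  have e0: "N * \<eta> \<ge> 0" "N^2 * \<eta> \<ge> 0" using N3' eta by auto
  have "3 * (N^2 * \<eta>) \<le> N * (N^2 * \<eta>)" using N3' e0 by (intro mult_right_mono) auto
  then have e2: "N^2 * \<eta> \<le> 1/300" using N3e by (simp add: power3_eq_cube power2_eq_square algebra_simps)
  have "3 * (N * \<eta>) \<le> N * (N * \<eta>)" using N3' e0 by (intro mult_right_mono) auto
  then have e1: "N * \<eta> \<le> 1/900" using e2 by (simp add: power2_eq_square algebra_simps)
  have "3 * \<eta> \<le> N * \<eta>" using N3' eta by (intro mult_right_mono) auto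
  then have e00: "\<eta> \<le> 1/2700" using e1 by simp
  have xb: "\<bar>x$k\<bar> \<le> r" for k using component_le_norm_cart r by metis
  have q0: "q \<ge> 0" "q \<le> 1/2" using Q r q_def by auto
  have q2: "q^2 \<le> 1/4" proof -
    have "q * q \<le> (1/2) * (1/2)" using q0 by (intro mult_mono) auto
    then show ?thesis by (simp add: power2_eq_square)
  qed
  have pb: "\<bar>p k\<bar> \<le> q" for k
  proof -
    have "\<bar>p k\<bar> = Q * \<bar>x$k\<bar>" using px Q by (simp add: abs_mult)
    also have "\<dots> \<le> Q * r" using xb Q by (intro mult_left_mono) auto
    finally show ?thesis using q_def by simp
  qed
  have xx: "(\<Sum>i\<in>UNIV. x$i * x$i) = r^2" using sq_sum_norm r by metis
  have pp: "(\<Sum>i\<in>UNIV. p i * p i) = q^2"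
  proof -
    have "(\<Sum>i\<in>UNIV. p i * p i) = (\<Sum>i\<in>UNIV. Q^2 * (x$i * x$i))" using px by (simp add: power2_eq_square algebra_simps)
    also have "\<dots> = Q^2 * r^2" using xx by (simp add: sum_distrib_left[symmetric])
    finally show ?thesis using q_def by (simp add: power_mult_distrib)
  qed
  have pxs: "(\<Sum>i\<in>UNIV. p i * x$i) = - Q * r^2"
  proof -
    have "(\<Sum>i\<in>UNIV. p i * x$i) = (\<Sum>i\<in>UNIV. (-Q) * (x$i * x$i))" using px by (simp add: algebra_simps)
    also have "\<dots> = (-Q) * (\<Sum>i\<in>UNIV. x$i * x$i)" by (rule sum_distrib_left[symmetric])
    also have "\<dots> = - Q * r^2" using xx by simp
    finally show ?thesis .
  qed
  define sq where "sq = (\<Sum>k\<in>UNIV. \<Sum>l\<in>UNIV. S k l * p k * p l)"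
  have sq_eq: "sq = q^2 + (\<Sum>k\<in>UNIV. \<Sum>l\<in>UNIV. a k l * p k * p l)"
  proof -
    have "sq = (\<Sum>k\<in>UNIV. \<Sum>l\<in>UNIV. (if k = l then 1 else 0) * (p k * p l) + a k l * p k * p l)"
      unfolding sq_def Sa by (simp add: algebra_simps)
    also have "\<dots> = (\<Sum>k\<in>UNIV. \<Sum>l\<in>UNIV. (if k = l then 1 else 0) * (p k * p l)) + (\<Sum>k\<in>UNIV. \<Sum>l\<in>UNIV. a k l * p k * p l)"
      by (simp add: sum.distrib)
    also have "(\<Sum>k\<in>UNIV. \<Sum>l\<in>UNIV. (if k = l then 1 else 0) * (p k * p l)) = q^2"
      using sum_delta2[of "\<lambda>k l. p k * p l"] pp by simp
    finally show ?thesis .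
  qed
  have sq_b: "\<bar>sq - q^2\<bar> \<le> N^2 * \<eta> * q^2"
  proof -
    have "\<bar>a k l * p k * p l\<bar> \<le> \<eta> * q^2" for k l
    proof -
      have "\<bar>a k l * p k * p l\<bar> = \<bar>a k l\<bar> * \<bar>p k\<bar> * \<bar>p l\<bar>" by (simp add: abs_mult)
      also have "\<dots> \<le> \<eta> * q * q" using ab pb eta q0 by (intro mult_mono) auto
      finally show ?thesis by (simp add: power2_eq_square)
    qed
    then have "\<bar>\<Sum>k\<in>UNIV. \<Sum>l\<in>UNIV. a k l * p k * p l\<bar> \<le> N * (N * (\<eta> * q^2))"
      unfolding N_def by (rule sum_bound2)
    then show ?thesis using sq_eq by (simp add: power2_eq_square algebra_simps)
  qed
  have sqq: "\<bar>sq - q^2\<bar> \<le> q^2 / 300"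
  proof -
    have "N^2 * \<eta> * q^2 \<le> (1/300) * q^2" using e2 by (intro mult_right_mono) auto
    then show ?thesis using sq_b by simp
  qed
  define D where "D = 1 - sq"
  define E where "E = 1 - q^2"
  have DE: "D \<ge> 74/100" "E \<ge> 3/4" "\<bar>D - E\<bar> \<le> N^2 * \<eta> * q^2" "\<bar>D - E\<bar> \<le> N^2 * \<eta> / 4"
  proof -
    show "D \<ge> 74/100" using sqq q2 unfolding D_def by linarith
    show "E \<ge> 3/4" using q2 unfolding E_def by linarith
    show "\<bar>D - E\<bar> \<le> N^2 * \<eta> * q^2" using sq_b unfolding D_def E_def by linarith
    have "N^2 * \<eta> * q^2 \<le> N^2 * \<eta> * (1/4)" using q2 e0 by (intro mult_left_mono) auto
    then show "\<bar>D - E\<bar> \<le> N^2 * \<eta> / 4" using sq_b unfolding D_def E_def by linarith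
  qed
  have first: "sq < 1" using DE D_def by linarith
  define v where "v i = (\<Sum>k\<in>UNIV. S i k * p k)" for i
  have vp: "v i - p i = (\<Sum>k\<in>UNIV. a i k * p k)" for i
  proof -
    have "v i = (\<Sum>k\<in>UNIV. (if i = k then p k else 0) + a i k * p k)"
      unfolding v_def Sa by (rule sum.cong) (auto simp: algebra_simps)
    also have "\<dots> = p i + (\<Sum>k\<in>UNIV. a i k * p k)" by (simp add: sum.distrib sum.delta)
    finally show ?thesis by simp
  qed
  have vpb: "\<bar>v i - p i\<bar> \<le> q / 900" for i
  proof -
    have "\<bar>a i k * p k\<bar> \<le> \<eta> * q" for k
      unfolding abs_mult using ab pb eta by (intro mult_mono) auto
    then have "\<bar>v i - p i\<bar> \<le> N * (\<eta> * q)" unfolding vp N_def by (rule sum_bound1)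
    also have "\<dots> = (N * \<eta>) * q" by simp
    also have "\<dots> \<le> (1/900) * q" using e1 q0 by (intro mult_right_mono) auto
    finally show ?thesis by simp
  qed
  have vpb2: "\<bar>v i - p i\<bar> \<le> N * \<eta> * q" for i
  proof -
    have "\<bar>a i k * p k\<bar> \<le> \<eta> * q" for k
      unfolding abs_mult using ab pb eta by (intro mult_mono) auto
    then have "\<bar>v i - p i\<bar> \<le> N * (\<eta> * q)" unfolding vp N_def by (rule sum_bound1)
    then show ?thesis by simp
  qed
  have vb: "\<bar>v i\<bar> \<le> 2 * q" for i using vpb[of i] pb[of i] q0 by linarith
  have XX: "(\<Sum>k\<in>UNIV. \<Sum>l\<in>UNIV. S i k * S j l * p k * p l) = v i * v j" for i j
    unfolding v_def sum_product by (intro sum.cong refl) (simp add: algebra_simps)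
  have vvb: "\<bar>v i * v j - p i * p j\<bar> \<le> 3 * N * \<eta> / 4" for i j
  proof -
    have eq: "v i * v j - p i * p j = (v i - p i) * v j + p i * (v j - p j)" by (simp add: algebra_simps)
    have "\<bar>(v i - p i) * v j\<bar> \<le> (N * \<eta> * q) * (2 * q)" unfolding abs_mult
      using vpb2 vb e0 q0 by (intro mult_mono) auto
    moreover have "\<bar>p i * (v j - p j)\<bar> \<le> q * (N * \<eta> * q)" unfolding abs_mult
      using vpb2 pb e0 q0 by (intro mult_mono) auto
    moreover have "\<bar>v i * v j - p i * p j\<bar> \<le> \<bar>(v i - p i) * v j\<bar> + \<bar>p i * (v j - p j)\<bar>"
      unfolding eq by (rule abs_triangle_ineq)
    moreover have "(N * \<eta> * q) * (2 * q) + q * (N * \<eta> * q) = 3 * (N * \<eta>) * q^2"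
      by (simp add: power2_eq_square algebra_simps)
    ultimately have "\<bar>v i * v j - p i * p j\<bar> \<le> 3 * (N * \<eta>) * q^2" by linarith
    also have "\<dots> \<le> 3 * (N * \<eta>) * (1/4)" using q2 e0 by (intro mult_left_mono) auto
    finally show ?thesis by simp
  qed
  define g where "g i j = S i j + v i * v j / D" for i j
  define g0 where "g0 i j = (if i = j then 1 else 0) + p i * p j / E" for i j
  have ppb: "\<bar>p i * p j\<bar> \<le> 1/4" for i j
  proof -
    have "\<bar>p i * p j\<bar> \<le> q * q" unfolding abs_mult using pb q0 by (intro mult_mono) auto
    then show ?thesis using q2 by (simp add: power2_eq_square)
  qed
  have gdiff: "\<bar>g i j - g0 i j\<bar> \<le> 2 * N^2 * \<eta>" for i j
  proof -
    have qd: "\<bar>v i * v j / D - p i * p j / E\<bar> \<le> 2 * (3 * N * \<eta> / 4) + (N^2 * \<eta> / 4) / 2"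
      by (rule quot_diff[OF vvb DE(4) DE(1) DE(2) ppb])
    have eq: "g i j - g0 i j = a i j + (v i * v j / D - p i * p j / E)"
      unfolding g_def g0_def a_def by simp
    have "\<bar>g i j - g0 i j\<bar> \<le> \<eta> + (2 * (3 * N * \<eta> / 4) + (N^2 * \<eta> / 4) / 2)"
      unfolding eq using ab[of i j] qd abs_triangle_ineq[of "a i j" "v i * v j / D - p i * p j / E"] by linarith
    moreover have "9 * \<eta> \<le> N^2 * \<eta>"
    proof -
      have "N^2 \<ge> 3^2" using N3' by (intro power_mono) auto
      then show ?thesis using eta by (intro mult_right_mono) auto
    qed
    moreover have "3 * (N * \<eta>) \<le> N * (N * \<eta>)" using N3' e0 by (intro mult_right_mono) auto
    ultimately show ?thesis by (simp add: power2_eq_square algebra_simps)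
  qed
  have gb: "\<bar>g i j\<bar> \<le> 4" for i j
  proof -
    have "\<bar>S i j\<bar> \<le> 2" using Sb[of i j] e00 by (auto split: if_splits)
    moreover have "\<bar>v i * v j / D\<bar> \<le> 2"
    proof -
      have "\<bar>v i * v j\<bar> \<le> (2*q) * (2*q)" unfolding abs_mult using vb q0 by (intro mult_mono) auto
      also have "\<dots> \<le> 1" using q2 by (simp add: power2_eq_square)
      finally have "\<bar>v i * v j\<bar> \<le> 1" .
      then have "\<bar>v i * v j\<bar> / D \<le> 1 / D" using DE by (intro divide_right_mono) auto
      also have "\<dots> \<le> 2" using DE by (simp add: field_simps)
      finally show ?thesis using DE by simp
    qed
    ultimately show ?thesis unfolding g_def using abs_triangle_ineq[of "S i j" "v i * v j / D"] by linarith
  qed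
  have Hb: "\<bar>Hf i j\<bar> \<le> 4 * Q" for i j
  proof -
    have "\<bar>x$i * x$j\<bar> \<le> r * r" unfolding abs_mult using xb r by (intro mult_mono) auto
    then have "\<bar>(\<alpha> + 2) * Q / r^2 * x$i * x$j\<bar> \<le> (\<alpha> + 2) * Q / r^2 * (r * r)"
    proof -
      have "\<bar>(\<alpha> + 2) * Q / r^2\<bar> = (\<alpha> + 2) * Q / r^2" using al Q r by simp
      then show ?thesis using al Q r \<open>\<bar>x$i * x$j\<bar> \<le> r * r\<close> unfolding mult.assoc abs_mult
        by (metis mult_left_mono abs_ge_zero abs_mult)
    qed
    also have "\<dots> = (\<alpha> + 2) * Q" using r by (simp add: power2_eq_square)
    finally have "\<bar>(\<alpha> + 2) * Q / r^2 * x$i * x$j\<bar> \<le> (\<alpha> + 2) * Q" .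
    moreover have "\<bar>Hf i j\<bar> \<le> \<bar>(\<alpha> + 2) * Q / r^2 * x$i * x$j\<bar> + \<bar>if i = j then Q else 0\<bar>"
      unfolding Hx by (rule abs_triangle_ineq4)
    moreover have "\<bar>if i = j then Q else (0::real)\<bar> \<le> Q" using Q by simp
    moreover have "(\<alpha> + 2) * Q \<le> 3 * Q" using al Q by (intro mult_right_mono) auto
    ultimately show ?thesis by linarith
  qed
  have Gpb: "\<bar>\<Sum>k\<in>UNIV. G k i j * p k\<bar> \<le> N * (\<gamma> * q)" for i j
  proof -
    have "\<bar>G k i j * p k\<bar> \<le> \<gamma> * q" for k
      unfolding abs_mult using Gb pb q0 by (intro mult_mono) (auto intro: order_trans[OF abs_ge_zero])
    then show ?thesis unfolding N_def by (rule sum_bound1)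
  qed
  define T where "T i j = (\<Sum>k\<in>UNIV. G k i j * p k)" for i j
  have opeq: "(\<Sum>i\<in>UNIV. \<Sum>j\<in>UNIV. (S i j + (\<Sum>k\<in>UNIV. \<Sum>l\<in>UNIV. S i k * S j l * p k * p l)
        / (1 - (\<Sum>k\<in>UNIV. \<Sum>l\<in>UNIV. S k l * p k * p l))) * (Hf i j - (\<Sum>k\<in>UNIV. G k i j * p k)))
     = (\<Sum>i\<in>UNIV. \<Sum>j\<in>UNIV. g i j * (Hf i j - T i j))"
    unfolding XX sq_def[symmetric] D_def[symmetric] g_def[symmetric] T_def[symmetric] ..
  have split: "(\<Sum>i\<in>UNIV. \<Sum>j\<in>UNIV. g i j * (Hf i j - T i j)) =
     (\<Sum>i\<in>UNIV. \<Sum>j\<in>UNIV. g0 i j * Hf i j) + (\<Sum>i\<in>UNIV. \<Sum>j\<in>UNIV. (g i j - g0 i j) * Hf i j)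
     - (\<Sum>i\<in>UNIV. \<Sum>j\<in>UNIV. g i j * T i j)"
    unfolding sum_subtractf[symmetric] sum.distrib[symmetric] by (simp add: algebra_simps)
  have P1: "\<bar>\<Sum>i\<in>UNIV. \<Sum>j\<in>UNIV. (g i j - g0 i j) * Hf i j\<bar> \<le> 8 * N^4 * \<eta> * Q"
  proof -
    have "\<bar>(g i j - g0 i j) * Hf i j\<bar> \<le> (2 * N^2 * \<eta>) * (4 * Q)" for i j
      unfolding abs_mult using gdiff Hb e0 by (intro mult_mono) (auto simp: mult.commute intro: order_trans[OF abs_ge_zero])
    then have "\<bar>\<Sum>i\<in>UNIV. \<Sum>j\<in>UNIV. (g i j - g0 i j) * Hf i j\<bar> \<le> N * (N * ((2 * N^2 * \<eta>) * (4 * Q)))"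
      unfolding N_def by (rule sum_bound2)
    then show ?thesis by (simp add: power2_eq_square power4_eq_xxxx algebra_simps)
  qed
  have P2: "\<bar>\<Sum>i\<in>UNIV. \<Sum>j\<in>UNIV. g i j * T i j\<bar> \<le> 4 * N^3 * \<gamma> * Q * r"
  proof -
    have "\<bar>g i j * T i j\<bar> \<le> 4 * (N * (\<gamma> * q))" for i j
      unfolding abs_mult T_def using gb Gpb by (intro mult_mono) (auto intro: order_trans[OF abs_ge_zero])
    then have "\<bar>\<Sum>i\<in>UNIV. \<Sum>j\<in>UNIV. g i j * T i j\<bar> \<le> N * (N * (4 * (N * (\<gamma> * q))))"
      unfolding N_def by (rule sum_bound2)
    then show ?thesis unfolding q_def by (simp add: power3_eq_cube algebra_simps)
  qed
  have diag: "(\<Sum>i\<in>UNIV. \<Sum>j\<in>UNIV. (if i = j then 1 else 0) * Hf i j) = (\<alpha> + 2) * Q - N * Q"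
  proof -
    have "(\<Sum>i\<in>UNIV. \<Sum>j\<in>UNIV. (if i = j then 1 else 0) * Hf i j) = (\<Sum>i\<in>UNIV. Hf i i)"
      by (rule sum_delta2)
    also have "\<dots> = (\<Sum>i\<in>UNIV. (\<alpha> + 2) * Q / r^2 * (x$i * x$i) - Q)" unfolding Hx by (simp add: mult.assoc)
    also have "\<dots> = (\<alpha> + 2) * Q / r^2 * (\<Sum>i\<in>UNIV. x$i * x$i) - N * Q"
      unfolding sum_subtractf sum_distrib_left[symmetric] N_def by simp
    also have "\<dots> = (\<alpha> + 2) * Q - N * Q" unfolding xx using r by simp
    finally show ?thesis .
  qed
  have ppH: "(\<Sum>i\<in>UNIV. \<Sum>j\<in>UNIV. p i * p j * Hf i j) = Q * q^2 * (\<alpha> + 1)"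
  proof -
    define c where "c = (\<alpha> + 2) * Q / r^2"
    define A where "A i = p i * x$i" for i
    define Dl where "Dl i j = (if i = j then 1 else 0) * (p i * p j)" for i j
    have "(\<Sum>i\<in>UNIV. \<Sum>j\<in>UNIV. p i * p j * Hf i j) =
      (\<Sum>i\<in>UNIV. \<Sum>j\<in>UNIV. c * (A i * A j) - Q * Dl i j)"
      unfolding Hx c_def A_def Dl_def by (intro sum.cong refl) (simp add: algebra_simps)
    also have "\<dots> = c * (\<Sum>i\<in>UNIV. \<Sum>j\<in>UNIV. A i * A j) - Q * (\<Sum>i\<in>UNIV. \<Sum>j\<in>UNIV. Dl i j)"
      by (simp add: sum_subtractf sum_distrib_left)
    also have "(\<Sum>i\<in>UNIV. \<Sum>j\<in>UNIV. A i * A j) = (\<Sum>i\<in>UNIV. A i) * (\<Sum>j\<in>UNIV. A j)"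
      by (rule sum_product[symmetric])
    also have "(\<Sum>i\<in>UNIV. A i) = - Q * r^2" unfolding A_def by (rule pxs)
    also have "(\<Sum>i\<in>UNIV. \<Sum>j\<in>UNIV. Dl i j) = q^2" unfolding Dl_def sum_delta2 pp ..
    also have "c * ((- Q * r^2) * (- Q * r^2)) - Q * q^2 = Q * q^2 * (\<alpha> + 1)"
      using r unfolding q_def c_def by (simp add: power2_eq_square field_simps)
    finally show ?thesis .
  qed
  have flat: "(\<Sum>i\<in>UNIV. \<Sum>j\<in>UNIV. g0 i j * Hf i j) = (\<alpha> + 2) * Q - N * Q + Q * (q^2 * (\<alpha> + 1) / E)"
  proof -
    have "(\<Sum>i\<in>UNIV. \<Sum>j\<in>UNIV. g0 i j * Hf i j) = (\<Sum>i\<in>UNIV. \<Sum>j\<in>UNIV. (if i = j then 1 else 0) * Hf i j)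
        + (1 / E) * (\<Sum>i\<in>UNIV. \<Sum>j\<in>UNIV. p i * p j * Hf i j)"
      unfolding g0_def sum_distrib_left sum.distrib[symmetric] by (intro sum.cong refl) (simp add: algebra_simps)
    then show ?thesis unfolding diag ppH by simp
  qed
  have fl: "Q * (q^2 * (\<alpha> + 1) / E) \<le> Q * (5/12)"
  proof -
    have "q^2 * (\<alpha> + 1) \<le> (1/4) * (5/4)" using q2 al by (intro mult_mono) auto
    then have "q^2 * (\<alpha> + 1) / E \<le> ((1/4) * (5/4)) / E" using DE
      by (intro divide_right_mono) auto
    also have "\<dots> \<le> ((1/4) * (5/4)) / (3/4)" using DE
      by (intro divide_left_mono) auto
    finally have "q^2 * (\<alpha> + 1) / E \<le> ((1/4) * (5/4)) / (3/4)" .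
    then show ?thesis using Q by (intro mult_left_mono) auto
  qed
  have fl2: "(\<alpha> + 2) * Q - N * Q \<le> (-3/4) * Q"
  proof -
    have "(\<alpha> + 2 - N) * Q \<le> (-3/4) * Q" using al N3' Q by (intro mult_right_mono) auto
    then show ?thesis by (simp add: algebra_simps)
  qed
  have "(\<Sum>i\<in>UNIV. \<Sum>j\<in>UNIV. g i j * (Hf i j - T i j)) \<le> 0"
  proof -
    have small': "8 * N^4 * \<eta> * Q + 4 * N^3 * \<gamma> * Q * r \<le> Q / 4" using small N_def by simp
    show ?thesis unfolding split flat using fl fl2 P1 P2 small' Q abs_le_iff by linarith
  qed
  then show ?thesis using first opeq sq_def by simp
qed

lemma matrix_inv_left':
  fixes M :: "real^'n^'n"
  assumes "invertible M"
  shows "matrix_inv M ** M = mat 1"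
proof -
  have "\<exists>A'. M ** A' = mat 1 \<and> A' ** M = mat 1" using assms unfolding invertible_def .
  then have "M ** matrix_inv M = mat 1 \<and> matrix_inv M ** M = mat 1"
    unfolding matrix_inv_def by (rule someI_ex)
  then show ?thesis by simp
qed

lemma inv_bound:
  fixes M :: "real^'n^'n"
  assumes inv: "invertible M"
    and Mb: "\<And>i j. \<bar>M$i$j - (if i = j then 1 else 0)\<bar> \<le> d"
    and d: "0 \<le> d" "real CARD('n) * d \<le> 1/2"
  shows "\<bar>matrix_inv M $ i $ j - (if i = j then 1 else 0)\<bar> \<le> 2 * d"
proof -
  define P where "P = matrix_inv M"
  define E where "E k j = M$k$j - (if k = j then 1 else 0)" for k j
  have PM: "P ** M = mat 1" using matrix_inv_left'[OF inv] P_def by simp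
  have ent: "P$i$j - (if i = j then 1 else 0) = - (\<Sum>k\<in>UNIV. P$i$k * E k j)" for i j
  proof -
    have "(P ** M)$i$j = (\<Sum>k\<in>UNIV. P$i$k * M$k$j)" by (simp add: matrix_matrix_mult_def)
    also have "\<dots> = (\<Sum>k\<in>UNIV. (if k = j then P$i$k else 0) + P$i$k * E k j)"
      unfolding E_def by (intro sum.cong refl) (simp add: algebra_simps)
    also have "\<dots> = P$i$j + (\<Sum>k\<in>UNIV. P$i$k * E k j)" by (simp add: sum.distrib sum.delta')
    finally have "(P ** M)$i$j = P$i$j + (\<Sum>k\<in>UNIV. P$i$k * E k j)" .
    moreover have "(P ** M)$i$j = (if i = j then 1 else 0)" unfolding PM by (simp add: mat_def)
    ultimately show ?thesis by linarith
  qed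
  define R where "R i = (\<Sum>k\<in>UNIV. \<bar>P$i$k\<bar>)" for i
  have entb: "\<bar>P$i$j - (if i = j then 1 else 0)\<bar> \<le> d * R i" for i j
  proof -
    have "\<bar>P$i$j - (if i = j then 1 else 0)\<bar> = \<bar>\<Sum>k\<in>UNIV. P$i$k * E k j\<bar>" using ent by simp
    also have "\<dots> \<le> (\<Sum>k\<in>UNIV. \<bar>P$i$k * E k j\<bar>)" by (rule sum_abs)
    also have "\<dots> \<le> (\<Sum>k\<in>UNIV. \<bar>P$i$k\<bar> * d)"
      unfolding abs_mult using Mb E_def by (intro sum_mono mult_left_mono) auto
    also have "\<dots> = d * R i" unfolding R_def by (simp add: sum_distrib_left mult.commute)
    finally show ?thesis .
  qed
  have Rb: "R i \<le> 2" for i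
  proof -
    have "(\<Sum>j\<in>UNIV. \<bar>P$i$j\<bar>) \<le> (\<Sum>j\<in>UNIV. (if i = j then 1 else 0) + d * R i)"
    proof (rule sum_mono)
      fix j
      show "\<bar>P$i$j\<bar> \<le> (if i = j then 1 else 0) + d * R i"
        using entb[of i j] by (auto split: if_splits)
    qed
    also have "\<dots> = 1 + real CARD('n) * (d * R i)" by (simp add: sum.distrib)
    finally have 1: "R i \<le> 1 + real CARD('n) * (d * R i)" unfolding R_def .
    then have 1: "R i \<le> 1 + real CARD('n) * d * R i" by simp
    have "R i \<ge> 0" unfolding R_def by (simp add: sum_nonneg)
    then have "real CARD('n) * d * R i \<le> (1/2) * R i" using d by (intro mult_right_mono) auto
    then show ?thesis using 1 by linarith
  qed
  have "d * R i \<le> d * 2" using Rb d by (intro mult_left_mono) auto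
  then show ?thesis using entb[of i j] P_def by simp
qed

lemma norm_powr_deriv:
  fixes x :: "'a::real_inner"
  assumes "x \<noteq> 0"
  shows "((\<lambda>y. norm y powr s) has_derivative (\<lambda>v. s * norm x powr (s - 2) * (x \<bullet> v))) (at x)"
proof -
  have n: "(norm has_derivative (\<lambda>h. h \<bullet> sgn x)) (at x)" using has_derivative_norm[OF assms] .
  have "((\<lambda>y. norm y powr (\<lambda>_. s) y) has_derivative
     (\<lambda>h. (norm x powr s) * ((\<lambda>_. 0) h * ln (norm x) + (h \<bullet> sgn x) * s / norm x))) (at x)"
    by (rule has_derivative_powr[OF n has_derivative_const]) (use assms in auto)
  moreover have "(\<lambda>h. (norm x powr s) * ((\<lambda>_. 0) h * ln (norm x) + (h \<bullet> sgn x) * s / norm x))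
      = (\<lambda>v. s * norm x powr (s - 2) * (x \<bullet> v))"
  proof
    fix h
    have nx: "norm x > 0" using assms by simp
    have p: "norm x powr (s - 2) = norm x powr s / (norm x)^2"
      using nx by (simp add: powr_diff)
    have sg: "h \<bullet> sgn x = (x \<bullet> h) / norm x" by (simp add: sgn_div_norm inner_commute field_simps)
    show "(norm x powr s) * ((\<lambda>_. 0) h * ln (norm x) + (h \<bullet> sgn x) * s / norm x) = s * norm x powr (s - 2) * (x \<bullet> h)"
      unfolding p sg using nx by (simp add: power2_eq_square field_simps)
  qed
  ultimately show ?thesis by simp
qed

lemma b_deriv:
  fixes x :: "real^'n"
  assumes "x \<noteq> 0"
  shows "((\<lambda>y. A * norm y powr (-\<alpha>)) has_derivative
     (\<lambda>v. ((- \<alpha> * A * norm x powr (-\<alpha>-2)) *\<^sub>R x) \<bullet> v)) (at x)"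
proof -
  have "((\<lambda>y. A * norm y powr (-\<alpha>)) has_derivative (\<lambda>v. A * ((-\<alpha>) * norm x powr (-\<alpha> - 2) * (x \<bullet> v)))) (at x)"
    by (rule has_derivative_mult_right[OF norm_powr_deriv[OF assms]])
  moreover have "(\<lambda>v. A * ((-\<alpha>) * norm x powr (-\<alpha> - 2) * (x \<bullet> v))) = (\<lambda>v. ((- \<alpha> * A * norm x powr (-\<alpha>-2)) *\<^sub>R x) \<bullet> v)"
    by (simp add: algebra_simps)
  ultimately show ?thesis by simp
qed

lemma Db_deriv:
  fixes x :: "real^'n"
  assumes "x \<noteq> 0"
  shows "((\<lambda>y. ((- \<alpha> * A * norm y powr (-\<alpha>-2)) *\<^sub>R y) $ k) has_derivative
     (\<lambda>v. \<Sum>l\<in>UNIV. (\<chi> k l. (- \<alpha> * A) * ((-\<alpha>-2) * norm x powr (-\<alpha>-4) * x$k * x$l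
          + (if k = l then norm x powr (-\<alpha>-2) else 0))) $ k $ l * v $ l)) (at x)"
proof -
  have d1: "((\<lambda>y. norm y powr (-\<alpha>-2)) has_derivative (\<lambda>v. (-\<alpha>-2) * norm x powr (-\<alpha>-2 - 2) * (x \<bullet> v))) (at x)"
    by (rule norm_powr_deriv[OF assms])
  have d2: "((\<lambda>y. y $ k) has_derivative (\<lambda>v. v $ k)) (at x)"
    by (rule bounded_linear.has_derivative[OF bounded_linear_vec_nth has_derivative_ident])
  have "((\<lambda>y. (- \<alpha> * A) * (norm y powr (-\<alpha>-2) * y $ k)) has_derivative
      (\<lambda>v. (- \<alpha> * A) * (norm x powr (-\<alpha>-2) * v $ k + (-\<alpha>-2) * norm x powr (-\<alpha>-2 - 2) * (x \<bullet> v) * x $ k))) (at x)"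
    by (rule has_derivative_mult_right[OF has_derivative_mult[OF d1 d2]])
  moreover have "(\<lambda>y. ((- \<alpha> * A * norm y powr (-\<alpha>-2)) *\<^sub>R y) $ k) = (\<lambda>y. (- \<alpha> * A) * (norm y powr (-\<alpha>-2) * y $ k))"
    by (simp add: algebra_simps)
  moreover have "(\<lambda>v. (- \<alpha> * A) * (norm x powr (-\<alpha>-2) * v $ k + (-\<alpha>-2) * norm x powr (-\<alpha>-2 - 2) * (x \<bullet> v) * x $ k))
     = (\<lambda>v. \<Sum>l\<in>UNIV. (\<chi> k l. (- \<alpha> * A) * ((-\<alpha>-2) * norm x powr (-\<alpha>-4) * x$k * x$l
          + (if k = l then norm x powr (-\<alpha>-2) else 0))) $ k $ l * v $ l)"
  proof
    fix v
    have e4: "-\<alpha>-2-2 = -\<alpha>-4" by simp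
    define c1 where "c1 = (- \<alpha> * A) * ((-\<alpha>-2) * norm x powr (-\<alpha>-4) * x$k)"
    define c2 where "c2 = (- \<alpha> * A) * norm x powr (-\<alpha>-2)"
    have "(\<Sum>l\<in>UNIV. (\<chi> k l. (- \<alpha> * A) * ((-\<alpha>-2) * norm x powr (-\<alpha>-4) * x$k * x$l
          + (if k = l then norm x powr (-\<alpha>-2) else 0))) $ k $ l * v $ l)
      = (\<Sum>l\<in>UNIV. c1 * (x$l * v$l) + (if k = l then c2 * v $ l else 0))"
      unfolding c1_def c2_def by (intro sum.cong refl) (simp add: algebra_simps)
    also have "\<dots> = c1 * (\<Sum>l\<in>UNIV. x$l * v$l) + c2 * v $ k"
      unfolding sum.distrib sum_distrib_left[symmetric] by (simp add: sum.delta)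
    also have "(\<Sum>l\<in>UNIV. x$l * v$l) = x \<bullet> v" by (simp add: inner_vec_def)
    finally show "(- \<alpha> * A) * (norm x powr (-\<alpha>-2) * v $ k + (-\<alpha>-2) * norm x powr (-\<alpha>-2 - 2) * (x \<bullet> v) * x $ k)
     = (\<Sum>l\<in>UNIV. (\<chi> k l. (- \<alpha> * A) * ((-\<alpha>-2) * norm x powr (-\<alpha>-4) * x$k * x$l
          + (if k = l then norm x powr (-\<alpha>-2) else 0))) $ k $ l * v $ l)"
      unfolding e4 c1_def c2_def by (simp add: algebra_simps)
  qed
  ultimately show ?thesis by simp
qed

lemma christ_bound:
  fixes sig :: "real^'n \<Rightarrow> real^'n^'n"
  assumes "\<And>k l. \<bar>sinv sig x k l\<bar> \<le> 2" "\<And>i j k. \<bar>dsig x i j k\<bar> \<le> e"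
  shows "\<bar>christoffel sig dsig x k i j\<bar> \<le> 3 * real CARD('n) * e"
proof -
  have "\<bar>sinv sig x k l * (dsig x j l i + dsig x i l j - dsig x i j l)\<bar> \<le> 2 * (3 * e)" for l
  proof -
    have "\<bar>dsig x j l i + dsig x i l j - dsig x i j l\<bar> \<le> 3 * e"
      using assms(2)[of j l i] assms(2)[of i l j] assms(2)[of i j l] by linarith
    then show ?thesis unfolding abs_mult using assms(1)[of k l]
      by (intro mult_mono) auto
  qed
  then have "\<bar>\<Sum>l\<in>UNIV. sinv sig x k l * (dsig x j l i + dsig x i l j - dsig x i j l)\<bar> \<le> real CARD('n) * (2 * (3 * e))"
    by (rule sum_bound1)
  then show ?thesis unfolding christoffel_def by (simp add: abs_mult)
qed

lemma posdef_invertible: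
  fixes M :: "real^'n^'n"
  assumes "\<forall>v. v \<noteq> 0 \<longrightarrow> v \<bullet> (M *v v) > 0"
  shows "invertible M"
proof -
  have "\<forall>v. M *v v = 0 \<longrightarrow> v = 0"
  proof (intro allI impI)
    fix v assume "M *v v = 0"
    then show "v = 0" using assms by (metis inner_zero_right less_irrefl)
  qed
  then show ?thesis unfolding invertible_left_inverse matrix_left_invertible_ker .
qed

theorem corollary3p2:
  fixes sig :: "real^'n \<Rightarrow> real^'n^'n"
    and dsig :: "real^'n \<Rightarrow> 'n \<Rightarrow> 'n \<Rightarrow> 'n \<Rightarrow> real"
    and R :: real
  assumes "CARD('n) \<ge> 3"
    and "riemannian_metric_outside R sig dsig"
    and "asymptotically_flat sig dsig"
  shows "\<forall>r1>0. \<exists>r0\<ge>r1. r0 > R \<and>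
    (\<forall>h>0. \<exists>(b::real^'n \<Rightarrow> real) (f::real \<Rightarrow> real) (Db::real^'n \<Rightarrow> real^'n) (D2b::real^'n \<Rightarrow> real^'n^'n).
       (\<forall>x. norm x \<ge> r0 \<longrightarrow> b x = f (norm x)) \<and>
       (\<forall>x. norm x \<ge> r0 \<longrightarrow> b x > 0) \<and>
       (b \<longlongrightarrow> 0) at_infinity \<and>
       (\<forall>x. norm x = r0 \<longrightarrow> b x \<ge> h) \<and>
       (\<forall>x. norm x \<ge> r0 \<longrightarrow>
          (b has_derivative (\<lambda>v. Db x \<bullet> v)) (at x) \<and>
          (\<forall>k. ((\<lambda>y. Db y $ k) has_derivative (\<lambda>v. \<Sum>l\<in>UNIV. D2b x $ k $ l * v $ l)) (at x)) \<and>
          sq_norm_sig sig x (Db x) < 1 \<and>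
          static_operator sig dsig x (Db x) (D2b x) \<le> 0))"
proof (intro allI impI)
  fix r1 :: real assume r1: "r1 > 0"
  define N where "N = real CARD('n)"
  have N3: "N \<ge> 3" using assms(1) N_def by simp
  define \<delta> where "\<delta> = 1 / (200 * N^4)"
  have dpos: "\<delta> > 0" using N3 \<delta>_def by simp
  have Nd: "N * \<delta> \<le> 1/2"
  proof -
    have "N * \<delta> = 1 / (200 * N^3)" using N3 unfolding \<delta>_def by (simp add: power_eq_if field_simps)
    also have "\<dots> \<le> 1/2"
    proof -
      have "N^3 \<ge> 1" using N3 by (simp add: one_le_power)
      then have "200 * N^3 \<ge> 2" by simp
      then show ?thesis using N3 by (simp add: divide_le_eq)
    qed
    finally show ?thesis .
  qed
  have dle: "\<delta> \<le> 1/2"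
  proof -
    have "1 * \<delta> \<le> N * \<delta>" using N3 dpos by (intro mult_right_mono) auto
    then show ?thesis using Nd by simp
  qed
  obtain \<omega> :: "real \<Rightarrow> real" and C R1 where om: "(\<omega> \<longlongrightarrow> 0) at_top" and
    AF: "\<forall>x. norm x \<ge> R1 \<longrightarrow>
           (\<forall>i j. \<bar>sig x $ i $ j - (if i = j then 1 else 0)\<bar> \<le> C * \<omega> (norm x)) \<and>
           (\<forall>i j k. \<bar>dsig x i j k\<bar> \<le> C * \<omega> (norm x) / norm x)"
    using assms(3) unfolding asymptotically_flat_def by blast
  have "eventually (\<lambda>t. dist (\<omega> t) 0 < \<delta> / (\<bar>C\<bar> + 1)) at_top"
    by (rule tendstoD[OF om]) (use dpos in simp)
  then obtain T where T: "\<And>t. t \<ge> T \<Longrightarrow> \<bar>\<omega> t\<bar> < \<delta> / (\<bar>C\<bar> + 1)"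
    unfolding eventually_at_top_linorder dist_real_def by auto
  have Com: "C * \<omega> t \<le> \<delta>" if "t \<ge> T" for t
  proof -
    have "C * \<omega> t \<le> \<bar>C\<bar> * \<bar>\<omega> t\<bar>" by (simp add: abs_mult[symmetric])
    also have "\<dots> \<le> \<bar>C\<bar> * (\<delta> / (\<bar>C\<bar> + 1))" using T[OF that] by (intro mult_left_mono) auto
    also have "\<dots> \<le> \<delta>" using dpos by (simp add: field_simps)
    finally show ?thesis .
  qed
  define r0 where "r0 = max r1 (max (R + 1) (max R1 (max T 1)))"
  have r0: "r0 \<ge> r1" "r0 > R" "r0 \<ge> R1" "r0 \<ge> T" "r0 \<ge> 1" unfolding r0_def by auto
  have Sbd: "\<bar>sinv sig x i j - (if i = j then 1 else 0)\<bar> \<le> 2 * \<delta>"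
    and Gbd: "\<bar>christoffel sig dsig x k i j\<bar> \<le> 3 * N * (\<delta> / norm x)"
    if x: "norm x \<ge> r0" for x i j k
  proof -
    have nx: "norm x > 0" using x r0 by linarith
    have sb: "\<bar>sig x $ i $ j - (if i = j then 1 else 0)\<bar> \<le> \<delta>" for i j
      using AF x r0 Com[of "norm x"] by (meson order_trans)
    have db: "\<bar>dsig x i j k\<bar> \<le> \<delta> / norm x" for i j k
    proof -
      have "\<bar>dsig x i j k\<bar> \<le> C * \<omega> (norm x) / norm x" using AF x r0 by auto
      also have "\<dots> \<le> \<delta> / norm x" using Com[of "norm x"] x r0 nx by (intro divide_right_mono) auto
      finally show ?thesis .
    qed
    have inv: "invertible (sig x)"
      using assms(2) x r0 unfolding riemannian_metric_outside_def
      by (intro posdef_invertible) auto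
    have sb2: "\<bar>sinv sig x i j - (if i = j then 1 else 0)\<bar> \<le> 2 * \<delta>" for i j
      unfolding sinv_def by (rule inv_bound[OF inv sb]) (use dpos Nd N_def in auto)
    then show "\<bar>sinv sig x i j - (if i = j then 1 else 0)\<bar> \<le> 2 * \<delta>" .
    have "\<bar>sinv sig x k l\<bar> \<le> 2" for k l
      using sb2[of k l] dle by (auto split: if_splits)
    then have "\<bar>christoffel sig dsig x k i j\<bar> \<le> 3 * real CARD('n) * (\<delta> / norm x)"
      by (rule christ_bound) (rule db)
    then show "\<bar>christoffel sig dsig x k i j\<bar> \<le> 3 * N * (\<delta> / norm x)" using N_def by simp
  qed
  show "\<exists>r0\<ge>r1. r0 > R \<and>
    (\<forall>h>0. \<exists>(b::real^'n \<Rightarrow> real) (f::real \<Rightarrow> real) (Db::real^'n \<Rightarrow> real^'n) (D2b::real^'n \<Rightarrow> real^'n^'n).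
       (\<forall>x. norm x \<ge> r0 \<longrightarrow> b x = f (norm x)) \<and>
       (\<forall>x. norm x \<ge> r0 \<longrightarrow> b x > 0) \<and>
       (b \<longlongrightarrow> 0) at_infinity \<and>
       (\<forall>x. norm x = r0 \<longrightarrow> b x \<ge> h) \<and>
       (\<forall>x. norm x \<ge> r0 \<longrightarrow>
          (b has_derivative (\<lambda>v. Db x \<bullet> v)) (at x) \<and>
          (\<forall>k. ((\<lambda>y. Db y $ k) has_derivative (\<lambda>v. \<Sum>l\<in>UNIV. D2b x $ k $ l * v $ l)) (at x)) \<and>
          sq_norm_sig sig x (Db x) < 1 \<and>
          static_operator sig dsig x (Db x) (D2b x) \<le> 0))"
  proof (intro exI[of _ r0] conjI allI impI)
    show "r0 \<ge> r1" "r0 > R" using r0 by auto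
    fix h :: real assume h: "h > 0"
    define \<alpha> where "\<alpha> = min (1/4) (r0 / (2 * h))"
    have al: "\<alpha> > 0" "\<alpha> \<le> 1/4" "\<alpha> \<le> r0 / (2 * h)" using h r0 unfolding \<alpha>_def by auto
    define A where "A = h * r0 powr \<alpha>"
    have Apos: "A > 0" using h r0 A_def by simp
    define f where "f t = A * t powr (-\<alpha>)" for t :: real
    define b where "b y = A * norm y powr (-\<alpha>)" for y :: "real^'n"
    define Db where "Db y = (- \<alpha> * A * norm y powr (-\<alpha>-2)) *\<^sub>R y" for y :: "real^'n"
    define D2b where "D2b y = (\<chi> k l. (- \<alpha> * A) * ((-\<alpha>-2) * norm y powr (-\<alpha>-4) * y$k * y$l
          + (if k = l then norm y powr (-\<alpha>-2) else 0)))" for y :: "real^'n"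
    have K: "sq_norm_sig sig x (Db x) < 1 \<and> static_operator sig dsig x (Db x) (D2b x) \<le> 0"
      if x: "norm x \<ge> r0" for x
    proof -
      define r where "r = norm x"
      have rpos: "r > 0" using x r0 r_def by linarith
      define Q where "Q = \<alpha> * A * r powr (-\<alpha>-2)"
      have Qpos: "Q > 0" using al Apos rpos Q_def by simp
      have Qr: "Q * r \<le> 1/2"
      proof -
        have "Q * r = \<alpha> * A * (r powr (-\<alpha>-2) * r powr 1)" using rpos Q_def by simp
        also have "\<dots> = \<alpha> * A * r powr (-\<alpha>-1)" proof -
          have "-\<alpha>-2+1 = -\<alpha>-1" by simp
          then show ?thesis by (metis powr_add)
        qed
        also have "\<dots> \<le> \<alpha> * A * r0 powr (-\<alpha>-1)"
        proof -
          have "r powr (-\<alpha>-1) \<le> r0 powr (-\<alpha>-1)"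
            by (rule powr_mono2') (use al x r0 r_def in auto)
          moreover have "\<alpha> * A \<ge> 0" using al Apos by simp
          ultimately show ?thesis by (simp add: mult_left_mono)
        qed
        also have "\<dots> = \<alpha> * h * (r0 powr \<alpha> * r0 powr (-\<alpha>-1))" unfolding A_def by simp
        also have "r0 powr \<alpha> * r0 powr (-\<alpha>-1) = r0 powr (-1)"
        proof -
          have "\<alpha> + (-\<alpha>-1) = -1" by simp
          then show ?thesis by (metis powr_add)
        qed
        also have "\<alpha> * h * r0 powr (-1) = \<alpha> * h / r0" using r0 by (simp add: powr_minus divide_inverse)
        also have "\<dots> \<le> (r0 / (2 * h)) * h / r0" using al h r0 by (intro divide_right_mono mult_right_mono) auto
        also have "\<dots> = 1/2" using h r0 by simp
        finally show ?thesis .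
      qed
      have px: "Db x $ k = - Q * x$k" for k unfolding Db_def Q_def r_def by simp
      have Hx: "D2b x $ i $ j = (\<alpha> + 2) * Q / r^2 * x$i * x$j - (if i = j then Q else 0)" for i j
      proof -
        have "r powr (-\<alpha>-4) = r powr (-\<alpha>-2) * r powr (-2)"
        proof -
          have "-\<alpha>-4 = (-\<alpha>-2) + (-2)" by simp
          then show ?thesis by (metis powr_add)
        qed
        also have "r powr (-2) = 1 / r^2" using rpos by (simp add: powr_minus powr_realpow divide_inverse)
        finally have e: "r powr (-\<alpha>-4) = r powr (-\<alpha>-2) / r^2" by simp
        show ?thesis unfolding D2b_def Q_def r_def[symmetric] e using rpos by (simp add: field_simps)
      qed
      have small: "8 * real CARD('n) ^ 4 * (2 * \<delta>) * Q + 4 * real CARD('n) ^ 3 * (3 * N * (\<delta> / r)) * Q * r \<le> Q / 4"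
      proof -
        have "8 * real CARD('n) ^ 4 * (2 * \<delta>) * Q + 4 * real CARD('n) ^ 3 * (3 * N * (\<delta> / r)) * Q * r
           = 28 * (N^4 * \<delta>) * Q" using rpos unfolding N_def by (simp add: power_eq_if field_simps)
        also have "N^4 * \<delta> = 1/200" unfolding \<delta>_def using N3 by simp
        finally show ?thesis using Qpos by simp
      qed
      have eta: "real CARD('n) ^ 3 * (2 * \<delta>) \<le> 1/100"
      proof -
        have "real CARD('n) ^ 3 * (2 * \<delta>) = 1 / (100 * N)" unfolding \<delta>_def N_def using N3 N_def
          by (simp add: power_eq_if field_simps)
        also have "\<dots> \<le> 1/100" using N3 by (simp add: field_simps)
        finally show ?thesis .
      qed
      have "(\<Sum>k\<in>UNIV. \<Sum>l\<in>UNIV. sinv sig x k l * Db x $ k * Db x $ l) < 1 \<and>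
        (\<Sum>i\<in>UNIV. \<Sum>j\<in>UNIV. (sinv sig x i j + (\<Sum>k\<in>UNIV. \<Sum>l\<in>UNIV. sinv sig x i k * sinv sig x j l * Db x $ k * Db x $ l)
          / (1 - (\<Sum>k\<in>UNIV. \<Sum>l\<in>UNIV. sinv sig x k l * Db x $ k * Db x $ l))) * (D2b x $ i $ j - (\<Sum>k\<in>UNIV. christoffel sig dsig x k i j * Db x $ k))) \<le> 0"
        by (rule key[where S = "sinv sig x" and G = "christoffel sig dsig x" and x = x and p = "\<lambda>k. Db x $ k"
              and Hf = "\<lambda>i j. D2b x $ i $ j" and \<eta> = "2 * \<delta>" and \<gamma> = "3 * N * (\<delta> / r)" and r = r and Q = Q and \<alpha> = \<alpha>])
           (use assms(1) Sbd[OF x] Gbd[OF x] dpos eta r_def rpos Qpos Qr al small px Hx in auto)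
      then show ?thesis unfolding sq_norm_sig_def static_operator_def g_inv_def sig_hessian_def by simp
    qed
    show "\<exists>(b::real^'n \<Rightarrow> real) (f::real \<Rightarrow> real) (Db::real^'n \<Rightarrow> real^'n) (D2b::real^'n \<Rightarrow> real^'n^'n).
       (\<forall>x. norm x \<ge> r0 \<longrightarrow> b x = f (norm x)) \<and>
       (\<forall>x. norm x \<ge> r0 \<longrightarrow> b x > 0) \<and>
       (b \<longlongrightarrow> 0) at_infinity \<and>
       (\<forall>x. norm x = r0 \<longrightarrow> b x \<ge> h) \<and>
       (\<forall>x. norm x \<ge> r0 \<longrightarrow>
          (b has_derivative (\<lambda>v. Db x \<bullet> v)) (at x) \<and>
          (\<forall>k. ((\<lambda>y. Db y $ k) has_derivative (\<lambda>v. \<Sum>l\<in>UNIV. D2b x $ k $ l * v $ l)) (at x)) \<and>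
          sq_norm_sig sig x (Db x) < 1 \<and>
          static_operator sig dsig x (Db x) (D2b x) \<le> 0)"
    proof (intro exI[of _ b] exI[of _ f] exI[of _ Db] exI[of _ D2b] conjI allI impI)
      fix x :: "real^'n" assume "norm x \<ge> r0"
      then show "b x = f (norm x)" unfolding b_def f_def by simp
    next
      fix x :: "real^'n" assume "norm x \<ge> r0"
      then have "norm x > 0" using r0 by linarith
      then show "b x > 0" unfolding b_def using Apos by simp
    next
      have "((\<lambda>y::real^'n. norm y powr (-\<alpha>)) \<longlongrightarrow> 0) at_infinity"
        by (rule tendsto_neg_powr) (use al filterlim_norm_at_top in auto)
      then have "((\<lambda>y::real^'n. A * norm y powr (-\<alpha>)) \<longlongrightarrow> A * 0) at_infinity"
        by (intro tendsto_mult tendsto_const)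
      then show "(b \<longlongrightarrow> 0) at_infinity" unfolding b_def by simp
    next
      fix x :: "real^'n" assume "norm x = r0"
      then have "b x = h * (r0 powr \<alpha> * r0 powr (-\<alpha>))" unfolding b_def A_def by simp
      also have "\<dots> = h" using r0 by (simp add: powr_add[symmetric])
      finally show "b x \<ge> h" by simp
    next
      fix x :: "real^'n" assume "norm x \<ge> r0"
      then have "x \<noteq> 0" using r0 by auto
      then show "(b has_derivative (\<lambda>v. Db x \<bullet> v)) (at x)"
        unfolding b_def Db_def by (rule b_deriv)
    next
      fix x :: "real^'n" and k assume "norm x \<ge> r0"
      then have "x \<noteq> 0" using r0 by auto
      then show "((\<lambda>y. Db y $ k) has_derivative (\<lambda>v. \<Sum>l\<in>UNIV. D2b x $ k $ l * v $ l)) (at x)"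
        unfolding Db_def D2b_def by (rule Db_deriv)
    next
      fix x :: "real^'n" assume x: "norm x \<ge> r0"
      then show "sq_norm_sig sig x (Db x) < 1" using K by blast
    next
      fix x :: "real^'n" assume x: "norm x \<ge> r0"
      then show "static_operator sig dsig x (Db x) (D2b x) \<le> 0" using K by blast
    qed
  qed
qed

end
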